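(* If $A\subseteq\mathbb{N}$ is quasicreative, then $\overline{A}=\mathbb{N}\setminus A$ contains an infinite recursively enumerable subset.
   Context: $\varphi_0,\varphi_1,\ldots$ is a standard acceptable enumeration of the partial computable functions $\mathbb{N}\to\mathbb{N}$ and $\mathcal{W}_e=\operatorname{dom}\varphi_e$. $\mathfrak{P}_{\mathrm{fin}}(\mathbb{N})$ is the set of finite subsets of $\mathbb{N}$; $f\colon\mathbb{N}\to\mathfrak{P}_{\mathrm{fin}}(\mathbb{N})$ is computable if $e\mapsto$ (canonical index of $f(e)$) is computable. A recursively enumerable $A$ is quasicreative if there is a computable $f\colon\mathbb{N}\to\mathfrak{P}_{\mathrm{fin}}(\mathbb{N})$ such that for all $e$, if $\mathcal{W}_e\subseteq\overline{A}$ then $f(e)\subseteq\overline{A}$ and there is $z\in f(e)$ with $z\in\overline{A}\setminus\mathcal{W}_e$. *)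

theory Defs
  imports Main "HOL-Library.Nat_Bijection"
begin

datatype recf = Z | S | Id nat | Cn recf "recf list" | Pr recf recf | Mn recf

inductive eval :: "recf \<Rightarrow> nat list \<Rightarrow> nat \<Rightarrow> bool" where
  eval_Z: "eval Z xs 0"
| eval_S: "eval S (x # xs) (Suc x)"
| eval_Id: "i < length xs \<Longrightarrow> eval (Id i) xs (xs ! i)"
| eval_Cn: "list_all2 (\<lambda>g y. eval g xs y) gs ys \<Longrightarrow> eval f ys z \<Longrightarrow> eval (Cn f gs) xs z"
| eval_Pr0: "eval f xs y \<Longrightarrow> eval (Pr f g) (0 # xs) y"
| eval_PrS: "eval (Pr f g) (k # xs) v \<Longrightarrow> eval g (k # v # xs) y \<Longrightarrow> eval (Pr f g) (Suc k # xs) y"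
| eval_Mn: "eval f (y # xs) 0 \<Longrightarrow> (\<forall>z<y. \<exists>v. eval f (z # xs) v \<and> v > 0) \<Longrightarrow> eval (Mn f) xs y"
monos list_all2_mono

primrec encode :: "recf \<Rightarrow> nat" where
  "encode Z = prod_encode (0, 0)"
| "encode S = prod_encode (1, 0)"
| "encode (Id i) = prod_encode (2, i)"
| "encode (Cn f gs) = prod_encode (3, prod_encode (encode f, list_encode (map encode gs)))"
| "encode (Pr f g) = prod_encode (4, prod_encode (encode f, encode g))"
| "encode (Mn f) = prod_encode (5, encode f)"

text \<open>\<open>phi e x y\<close>: the e-th partial computable function \<open>\<phi>_e\<close> maps x to y.
  Numbers that are not codes of terms index the nowhere-defined function.\<close>
definition phi :: "nat \<Rightarrow> nat \<Rightarrow> nat \<Rightarrow> bool" where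
  "phi e x y \<longleftrightarrow> (\<exists>c. encode c = e \<and> eval c [x] y)"

definition W :: "nat \<Rightarrow> nat set" where
  "W e = {x. \<exists>y. phi e x y}"

definition re :: "nat set \<Rightarrow> bool" where
  "re A \<longleftrightarrow> (\<exists>e. A = W e)"

definition total_computable :: "(nat \<Rightarrow> nat) \<Rightarrow> bool" where
  "total_computable g \<longleftrightarrow> (\<exists>e. \<forall>x. phi e x (g x))"

definition canon_index :: "nat set \<Rightarrow> nat" where
  "canon_index D = (\<Sum>x\<in>D. 2 ^ x)"

definition computable_fin :: "(nat \<Rightarrow> nat set) \<Rightarrow> bool" where
  "computable_fin f \<longleftrightarrow> (\<forall>e. finite (f e)) \<and> total_computable (\<lambda>e. canon_index (f e))"

definition quasicreative :: "nat set \<Rightarrow> bool" where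
  "quasicreative A \<longleftrightarrow> re A \<and>
     (\<exists>f. computable_fin f \<and>
        (\<forall>e. W e \<subseteq> - A \<longrightarrow> f e \<subseteq> - A \<and> (\<exists>z\<in>f e. z \<in> - A - W e)))"

end

theory Submission
  imports Defs
begin


lemma eval_det: "eval c xs y \<Longrightarrow> eval c xs y' \<Longrightarrow> y = y'"
proof (induction arbitrary: y' rule: eval.induct)
  case (eval_Cn xs gs ys f z)
  from eval_Cn.prems obtain ys' where a: "list_all2 (\<lambda>g y. eval g xs y) gs ys'" and b: "eval f ys' y'"
    by (cases rule: eval.cases) auto
  have "ys = ys'" using eval_Cn.IH(1) a
  proof (induction gs arbitrary: ys ys')
    case Nil then show ?case by simp
  next
    case (Cons g gs)
    then show ?case by (auto simp: list_all2_Cons1)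
  qed
  then show ?case using eval_Cn.IH(2) b by simp
next
  case (eval_Mn f y xs)
  from eval_Mn.prems obtain y2 where a: "eval f (y2 # xs) 0" and b: "\<forall>z<y2. \<exists>v. eval f (z # xs) v \<and> v > 0"
    and c: "y' = y2"
    by (cases rule: eval.cases) auto
  show ?case
  proof (rule ccontr)
    assume "y \<noteq> y'"
    then have "y < y2 \<or> y2 < y" using c by auto
    then show False
    proof
      assume "y < y2" then obtain v where "eval f (y # xs) v" "v > 0" using b by auto
      then show False using eval_Mn.IH(1) by fastforce
    next
      assume "y2 < y" then obtain v where "eval f (y2 # xs) v" "v > 0" and "\<forall>v'. eval f (y2 # xs) v' \<longrightarrow> v = v'"
        using eval_Mn.IH(2) by blast
      then show False using a by fastforce
    qed
  qed
next
  case (eval_Z xs) from eval_Z.prems show ?case by (cases rule: eval.cases) auto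
next
  case (eval_S x xs) from eval_S.prems show ?case by (cases rule: eval.cases) auto
next
  case (eval_Id i xs) from eval_Id.prems show ?case by (cases rule: eval.cases) auto
next
  case (eval_Pr0 f xs y g) from eval_Pr0.prems show ?case
    by (cases rule: eval.cases) (use eval_Pr0.IH in auto)
next
  case (eval_PrS f g k xs v y)
  from eval_PrS.prems obtain v2 where "eval (Pr f g) (k # xs) v2" "eval g (k # v2 # xs) y'"
    by (cases rule: eval.cases) auto
  then show ?case using eval_PrS.IH by auto
qed

lemma encode_inj: "encode c = encode d \<Longrightarrow> c = d"
proof (induction c arbitrary: d)
  case (Cn f gs)
  then show ?case
  proof (cases d)
    case (Cn f' gs')
    have "map encode gs = map encode gs'" using Cn.prems Cn by (simp add: list_encode_eq)
    then have "gs = gs'" using Cn.IH(2)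
    proof (induction gs arbitrary: gs')
      case Nil then show ?case by simp
    next
      case (Cons g gs) then show ?case by (cases gs') auto
    qed
    then show ?thesis using Cn.prems Cn Cn.IH(1) by simp
  qed auto
next
  case Z then show ?case by (cases d) auto
next
  case S then show ?case by (cases d) auto
next
  case (Id i) then show ?case by (cases d) auto
next
  case (Pr f g) then show ?case by (cases d) auto
next
  case (Mn f) then show ?case by (cases d) auto
qed



lemma evCn1: "eval g xs y \<Longrightarrow> eval f [y] z \<Longrightarrow> eval (Cn f [g]) xs z"
  by (rule eval_Cn) auto
lemma evCn2: "eval g1 xs y1 \<Longrightarrow> eval g2 xs y2 \<Longrightarrow> eval f [y1,y2] z \<Longrightarrow> eval (Cn f [g1,g2]) xs z"
  by (rule eval_Cn) auto
lemma evCn3: "eval g1 xs y1 \<Longrightarrow> eval g2 xs y2 \<Longrightarrow> eval g3 xs y3 \<Longrightarrow> eval f [y1,y2,y3] z \<Longrightarrow> eval (Cn f [g1,g2,g3]) xs z"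
  by (rule eval_Cn) auto
lemma evId: "i < length xs \<Longrightarrow> z = xs ! i \<Longrightarrow> eval (Id i) xs z" using eval_Id by simp
lemma evS: "z = Suc x \<Longrightarrow> eval S [x] z" using eval_S by auto

primrec K :: "nat \<Rightarrow> recf" where
  "K 0 = Z" | "K (Suc n) = Cn S [K n]"

lemma evK: "eval (K c) xs c"
  by (induction c) (auto intro: eval_Z evCn1 eval_S)

lemma evId0: "eval (Id 0) (x # xs) x" using eval_Id[of 0 "x#xs"] by simp
lemma evId1: "eval (Id 1) (a # x # xs) x" using eval_Id[of 1 "a#x#xs"] by simp
lemma evId2: "eval (Id 2) (a # b # x # xs) x" using eval_Id[of 2 "a#b#x#xs"] by simp
lemma evId3: "eval (Id 3) (a # b # c # x # xs) x" using eval_Id[of 3 "a#b#c#x#xs"] by simp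
lemma evS': "eval S [x] (Suc x)" using eval_S by auto

lemma evKe: "z = c \<Longrightarrow> eval (K c) xs z" using evK by simp
lemmas evrules = evCn1 evCn2 evCn3 evId evS evKe

definition "ADD = Pr (Id 0) (Cn S [Id 1])"
lemma evADD': "eval ADD [a,b] (a+b)"
  unfolding ADD_def
proof (induction a)
  case 0 show ?case by (rule eval_Pr0) (intro evrules, (simp)+)
next
  case (Suc a) show ?case
    by (rule eval_PrS[OF Suc]) (intro evrules, (simp)+)
qed
lemma evADD: "z = a + b \<Longrightarrow> eval ADD [a,b] z" using evADD' by simp

definition "MUL = Pr Z (Cn ADD [Id 1, Id 2])"
lemma evMUL: "z = a * b \<Longrightarrow> eval MUL [a,b] z"
  unfolding MUL_def
proof (induction a arbitrary: z)
  case 0 show ?case using 0 by (simp add: eval_Pr0 eval_Z)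
next
  case (Suc a) show ?case
    by (rule eval_PrS[OF Suc.IH[OF refl]]) (intro evrules evADD, (use Suc in simp)+)
qed

definition "PRED = Pr Z (Id 0)"
lemma evPRED': "eval PRED [k] (k - 1)"
  unfolding PRED_def
proof (induction k)
  case 0 show ?case by (simp add: eval_Pr0 eval_Z)
next
  case (Suc k) show ?case
    by (rule eval_PrS[OF Suc]) (intro evrules, (simp)+)
qed
lemma evPRED: "z = k - 1 \<Longrightarrow> eval PRED [k] z" using evPRED' by simp

definition "SUBR = Pr (Id 0) (Cn PRED [Id 1])"
lemma evSUBR': "eval SUBR [k,b] (b - k)"
  unfolding SUBR_def
proof (induction k)
  case 0 show ?case by (rule eval_Pr0) (intro evrules, (simp)+)
next
  case (Suc k) show ?case
    by (rule eval_PrS[OF Suc]) (intro evrules evPRED, (simp add: diff_diff_left)+)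
qed

lemma evSUBR_e: "z = b - k \<Longrightarrow> eval SUBR [k,b] z" using evSUBR' by simp
definition "SUB = Cn SUBR [Id 1, Id 0]"
lemma evSUB: "z = a - b \<Longrightarrow> eval SUB [a,b] z"
  unfolding SUB_def by (intro evrules evSUBR_e, simp+)

definition "POW2 = Pr (K 1) (Cn ADD [Id 1, Id 1])"
lemma evPOW2': "eval POW2 [k] (2^k)"
  unfolding POW2_def
proof (induction k)
  case 0 show ?case by (rule eval_Pr0) (use evK[of 1] in simp)
next
  case (Suc k) show ?case
    by (rule eval_PrS[OF Suc]) (intro evrules evADD, (simp add: mult_2)+)
qed
lemma evPOW2: "z = 2^k \<Longrightarrow> eval POW2 [k] z" using evPOW2' by simp



lemma evSUBe: "z = a - b \<Longrightarrow> eval SUB [a,b] z" by (rule evSUB)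

definition "HI = Cn SUB [Cn S [Id 1], Cn ADD [Cn S [Id 0], Cn S [Id 0]]]"
lemma evHI: "z = Suc c - (Suc t + Suc t) \<Longrightarrow> eval HI [t,c] z"
  unfolding HI_def apply (intro evrules evSUB evADD, (rule refl | simp)+) done

definition "HALF = Mn HI"
lemma evHALF: "z = c div 2 \<Longrightarrow> eval HALF [c] z"
  unfolding HALF_def
  apply (rule eval_Mn)
   apply (rule evHI) apply simp
  apply (intro allI impI exI conjI)
   apply (rule evHI, rule refl)
  apply simp
  done

definition "PAR = Cn SUB [Id 0, Cn ADD [HALF, HALF]]"
lemma evPAR: "z = c mod 2 \<Longrightarrow> eval PAR [c] z"
  unfolding PAR_def apply (intro evrules evSUB evADD evHALF, (rule refl | simp)+) apply presburger done

lemma div_pow_Suc: "(c::nat) div (2 * 2 ^ x) = c div 2 ^ x div 2"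
  by (metis div_mult2_eq mult.commute)

definition "DIVP = Pr (Id 0) (Cn HALF [Id 1])"
lemma evDIVP': "eval DIVP [x,c] (c div 2^x)"
  unfolding DIVP_def
proof (induction x)
  case 0 show ?case apply (rule eval_Pr0) apply (intro evrules, (rule refl | simp)+) done
next
  case (Suc x) show ?case
    apply (rule eval_PrS[OF Suc]) apply (intro evrules evHALF, (rule refl | simp add: div_pow_Suc)+) done
qed
lemma evDIVP: "z = c div 2^x \<Longrightarrow> eval DIVP [x,c] z" using evDIVP' by simp

definition cb :: "nat \<Rightarrow> nat \<Rightarrow> nat" where "cb c x = c div 2^x mod 2"

definition "BIT = Cn PAR [DIVP]"
lemma evBIT: "z = cb c x \<Longrightarrow> eval BIT [x,c] z"
  unfolding BIT_def cb_def apply (intro evrules evPAR evDIVP, (rule refl | simp)+) done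

definition "NB = Cn SUB [K 1, BIT]"
lemma evNB: "z = 1 - cb c x \<Longrightarrow> eval NB [x,c] z"
  unfolding NB_def apply (intro evrules evSUB evBIT, (rule refl | simp)+) done

definition orterm :: "nat \<Rightarrow> nat \<Rightarrow> nat \<Rightarrow> nat" where
  "orterm i a b = 2^i * (1 - (1 - (cb a i + cb b i)))"

definition "ORTM = Cn MUL [Cn POW2 [Id 0], Cn SUB [K 1, Cn SUB [K 1, Cn ADD [Cn BIT [Id 0, Id 1], Cn BIT [Id 0, Id 2]]]]]"
lemma evORTM: "z = orterm i a b \<Longrightarrow> eval ORTM [i,a,b] z"
  unfolding ORTM_def orterm_def apply (intro evrules evSUB evBIT evMUL evPOW2 evADD, (rule refl | simp)+) done

definition "ORSUM = Pr Z (Cn ADD [Id 1, Cn ORTM [Id 0, Id 2, Id 3]])"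
lemma evORSUM': "eval ORSUM [m,a,b] (\<Sum>i<m. orterm i a b)"
  unfolding ORSUM_def
proof (induction m)
  case 0 show ?case by (simp add: eval_Pr0 eval_Z)
next
  case (Suc m) show ?case
    apply (rule eval_PrS[OF Suc]) apply (intro evrules evADD evORTM, (rule refl | simp)+) done
qed

lemma evORSUM: "z = (\<Sum>i<m. orterm i a b) \<Longrightarrow> eval ORSUM [m,a,b] z" using evORSUM' by simp

definition myor :: "nat \<Rightarrow> nat \<Rightarrow> nat" where "myor a b = (\<Sum>i<a+b. orterm i a b)"

definition "ORT = Cn ORSUM [ADD, Id 0, Id 1]"
lemma evORT: "z = myor a b \<Longrightarrow> eval ORT [a,b] z"
  unfolding ORT_def myor_def apply (intro evrules evADD evORSUM, (rule refl | simp)+) done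

definition "TRI = Pr Z (Cn ADD [Id 1, Cn S [Id 0]])"
lemma evTRI': "eval TRI [k] (triangle k)"
  unfolding TRI_def
proof (induction k)
  case 0 show ?case by (simp add: eval_Pr0 eval_Z)
next
  case (Suc k) show ?case
    apply (rule eval_PrS[OF Suc]) apply (intro evrules evADD, (rule refl | simp)+) done
qed

lemma evTRI: "z = triangle k \<Longrightarrow> eval TRI [k] z" using evTRI' by simp

definition "PE = Cn ADD [Cn TRI [ADD], Id 0]"
lemma evPE: "z = prod_encode (m,n) \<Longrightarrow> eval PE [m,n] z"
  unfolding PE_def prod_encode_def apply (intro evrules evADD evTRI, (rule refl | simp)+) done



definition "EK = Pr (K (encode (K 0))) (Cn PE [K 3, Cn PE [K (prod_encode (1,0)), Cn S [Cn PE [Id 1, K 0]]]])"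
lemma ek_step: "eval (Cn PE [K 3, Cn PE [K (prod_encode (1, 0)), Cn S [Cn PE [recf.Id 1, K 0]]]]) [c, encode (K c)] (encode (K (Suc c)))"
  apply (intro evrules evPE)
  apply (rule refl | simp)+
  done

lemma evEK': "eval EK [c] (encode (K c))"
  unfolding EK_def
  apply (induction c)
   apply (rule eval_Pr0, rule evK)
  apply (rule eval_PrS, assumption, rule ek_step)
  done

lemma evEK: "z = encode (K c) \<Longrightarrow> eval EK [c] z" using evEK' by simp

definition T :: "nat \<Rightarrow> recf" where "T v = Mn (Cn NB [Id 1, K v])"

definition "IDX = Cn PE [K 5, Cn PE [K 3, Cn PE [K (encode NB), Cn S [Cn PE [K (encode (Id 1)), Cn S [Cn PE [EK, K 0]]]]]]]"
lemma evIDX: "z = encode (T v) \<Longrightarrow> eval IDX [v] z"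
  unfolding IDX_def T_def apply (intro evrules evPE evEK, (rule refl | simp)+) done



lemma cb_le1: "cb c x \<le> 1" unfolding cb_def by simp

lemma canon_split:
  assumes "finite D"
  shows "(\<Sum>i\<in>D. (2::nat)^i) = (if 0 \<in> D then 1 else 0) + 2 * (\<Sum>i\<in>{i. Suc i \<in> D}. 2^i)"
proof -
  let ?D' = "{i. Suc i \<in> D}"
  have fin: "finite ?D'" using finite_vimageI[OF assms inj_Suc] by (simp add: vimage_def)
  have eq: "D = (if 0 \<in> D then {0} else {}) \<union> Suc ` ?D'"
    by (auto simp: image_iff) (metis not0_implies_Suc)+
  have disj: "(if 0 \<in> D then {0} else {}) \<inter> Suc ` ?D' = {}" by auto
  have "(\<Sum>i\<in>D. (2::nat)^i) = (\<Sum>i\<in>(if 0 \<in> D then {0} else {}). 2^i) + (\<Sum>i\<in>Suc ` ?D'. 2^i)"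
    by (subst eq, rule sum.union_disjoint) (use fin disj in auto)
  also have "(\<Sum>i\<in>Suc ` ?D'. (2::nat)^i) = (\<Sum>i\<in>?D'. 2^Suc i)"
    by (rule sum.reindex_cong[of Suc]) auto
  also have "\<dots> = 2 * (\<Sum>i\<in>?D'. 2^i)" by (simp add: sum_distrib_left)
  finally show ?thesis by simp
qed

lemma cb_canon: "finite D \<Longrightarrow> cb (\<Sum>i\<in>D. 2^i) x = (if x \<in> D then 1 else 0)"
proof (induction x arbitrary: D)
  case 0
  then show ?case unfolding cb_def using canon_split[OF 0] by simp
next
  case (Suc x)
  let ?D' = "{i. Suc i \<in> D}"
  have fin: "finite ?D'" using finite_vimageI[OF Suc.prems inj_Suc] by (simp add: vimage_def)
  have "(\<Sum>i\<in>D. (2::nat)^i) div 2 = (\<Sum>i\<in>?D'. 2^i)"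
    using canon_split[OF Suc.prems] by simp
  moreover have "cb c (Suc x) = cb (c div 2) x" for c :: nat
    unfolding cb_def by (simp add: div_mult2_eq)
  ultimately show ?case using Suc.IH[OF fin] by simp
qed

lemma cb_less: "cb c x = 1 \<Longrightarrow> x < c"
proof -
  assume "cb c x = 1"
  then have "c div 2^x \<noteq> 0" unfolding cb_def by auto
  then have "2^x \<le> c" by (simp add: div_eq_0_iff)
  then show ?thesis using less_exp[of x] by (rule_tac less_le_trans) auto
qed

lemma orterm_eq: "orterm i a b = (if cb a i = 1 \<or> cb b i = 1 then 2^i else 0)"
  using cb_le1[of a i] cb_le1[of b i] unfolding orterm_def
  by (cases "cb a i"; cases "cb b i") auto

lemma cb_myor: "cb (myor a b) x = 1 \<longleftrightarrow> cb a x = 1 \<or> cb b x = 1"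
proof -
  let ?E = "{i\<in>{..<a+b}. cb a i = 1 \<or> cb b i = 1}"
  have "myor a b = (\<Sum>i\<in>?E. 2^i)"
    unfolding myor_def orterm_eq by (subst sum.inter_filter) auto
  then have "cb (myor a b) x = (if x \<in> ?E then 1 else 0)" using cb_canon[of ?E x] by simp
  moreover have "cb a x = 1 \<or> cb b x = 1 \<Longrightarrow> x < a + b"
  proof (elim disjE)
    assume "cb a x = 1" then have "x < a" by (rule cb_less) then show "x < a + b" by simp
  next
    assume "cb b x = 1" then have "x < b" by (rule cb_less) then show "x < a + b" by simp
  qed
  ultimately show ?thesis by (simp only: mem_Collect_eq lessThan_iff) (metis one_neq_zero)
qed



lemma get_term: "total_computable g \<Longrightarrow> \<exists>c. \<forall>x. eval c [x] (g x)"
proof -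
  assume "total_computable g"
  then obtain e where e: "\<forall>x. phi e x (g x)" unfolding total_computable_def by blast
  obtain c0 where c0: "encode c0 = e" using e unfolding phi_def by blast
  have "eval c0 [x] (g x)" for x
  proof -
    obtain c where "encode c = e" "eval c [x] (g x)" using e unfolding phi_def by blast
    moreover have "c = c0" using encode_inj c0 calculation(1) by simp
    ultimately show ?thesis by simp
  qed
  then show ?thesis by blast
qed

lemma eval_Mn_inv: "eval (Mn f) xs y \<Longrightarrow> eval f (y # xs) 0"
  by (cases rule: eval.cases) auto

definition Sset :: "nat \<Rightarrow> nat set" where "Sset v = {x. cb v x = 1}"

lemma W_T: "W (encode (T v)) = Sset v"
proof (rule set_eqI)
  fix x
  have inner: "eval (Cn NB [Id 1, K v]) [y, x] (1 - cb v x)" for y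
    by (intro evrules evNB, (rule refl | simp)+)
  show "x \<in> W (encode (T v)) \<longleftrightarrow> x \<in> Sset v"
  proof
    assume "x \<in> W (encode (T v))"
    then obtain y c where "encode c = encode (T v)" "eval c [x] y" unfolding W_def phi_def by blast
    then have "eval (T v) [x] y" using encode_inj by blast
    then have "eval (Cn NB [Id 1, K v]) [y, x] 0" unfolding T_def by (rule eval_Mn_inv)
    then have "1 - cb v x = 0" using inner eval_det by blast
    then show "x \<in> Sset v" unfolding Sset_def using cb_le1[of v x] by simp
  next
    assume "x \<in> Sset v"
    then have "eval (Cn NB [Id 1, K v]) [0, x] 0" using inner[of 0] unfolding Sset_def by simp
    then have "eval (T v) [x] 0" unfolding T_def by (intro eval_Mn) auto
    then show "x \<in> W (encode (T v))" unfolding W_def phi_def by blast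
  qed
qed

definition STEP :: "recf \<Rightarrow> recf" where "STEP cf = Cn ORT [Id 0, Cn cf [IDX]]"
definition SEQ :: "recf \<Rightarrow> recf" where "SEQ cf = Pr Z (Cn (STEP cf) [Id 1])"
definition BT :: "recf \<Rightarrow> recf" where "BT cf = Mn (Cn NB [Id 1, Cn (SEQ cf) [Id 0]])"

primrec sq :: "(nat \<Rightarrow> nat) \<Rightarrow> nat \<Rightarrow> nat" where
  "sq F 0 = 0"
| "sq F (Suc n) = myor (sq F n) (F (encode (T (sq F n))))"

lemma evSTEP:
  assumes cf: "\<forall>x. eval cf [x] (F x)"
  shows "z = myor v (F (encode (T v))) \<Longrightarrow> eval (STEP cf) [v] z"
proof -
  have cfe: "\<And>x z. z = F x \<Longrightarrow> eval cf [x] z" using cf by simp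
  show "z = myor v (F (encode (T v))) \<Longrightarrow> eval (STEP cf) [v] z"
    unfolding STEP_def by (intro evrules evORT evIDX cfe, (rule refl | simp)+)
qed

lemma evSEQ:
  assumes cf: "\<forall>x. eval cf [x] (F x)"
  shows "eval (SEQ cf) [n] (sq F n)"
  unfolding SEQ_def
proof (induction n)
  case 0 show ?case by (simp add: eval_Pr0 eval_Z)
next
  case (Suc n)
  show ?case
    apply (rule eval_PrS[OF Suc])
    apply (intro evrules evSTEP[OF cf])
       apply (rule refl | simp)+
    done
qed

lemma W_BT:
  assumes cf: "\<forall>x. eval cf [x] (F x)"
  shows "W (encode (BT cf)) = {x. \<exists>n. x \<in> Sset (sq F n)}"
proof (rule set_eqI)
  fix x
  have seqe: "\<And>n z. z = sq F n \<Longrightarrow> eval (SEQ cf) [n] z" using evSEQ[OF cf] by simp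
  have inner: "eval (Cn NB [Id 1, Cn (SEQ cf) [Id 0]]) [y, x] (1 - cb (sq F y) x)" for y
    by (intro evrules evNB seqe, (rule refl | simp)+)
  show "x \<in> W (encode (BT cf)) \<longleftrightarrow> x \<in> {x. \<exists>n. x \<in> Sset (sq F n)}"
  proof
    assume "x \<in> W (encode (BT cf))"
    then obtain y c where "encode c = encode (BT cf)" "eval c [x] y" unfolding W_def phi_def by blast
    then have "eval (BT cf) [x] y" using encode_inj by blast
    then have "eval (Cn NB [Id 1, Cn (SEQ cf) [Id 0]]) [y, x] 0" unfolding BT_def by (rule eval_Mn_inv)
    then have "1 - cb (sq F y) x = 0" using inner eval_det by blast
    then show "x \<in> {x. \<exists>n. x \<in> Sset (sq F n)}" unfolding Sset_def using cb_le1[of "sq F y" x] by auto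
  next
    assume "x \<in> {x. \<exists>n. x \<in> Sset (sq F n)}"
    then obtain n where n: "cb (sq F n) x = 1" unfolding Sset_def by auto
    define y where "y = (LEAST n. cb (sq F n) x = 1)"
    have y1: "cb (sq F y) x = 1" unfolding y_def by (rule LeastI[of _ n]) (rule n)
    have y2: "cb (sq F z) x = 0" if "z < y" for z
    proof -
      have "cb (sq F z) x \<noteq> 1" using not_less_Least[OF that[unfolded y_def]] .
      then show ?thesis using cb_le1[of "sq F z" x] by simp
    qed
    have "eval (BT cf) [x] y" unfolding BT_def
    proof (rule eval_Mn)
      show "eval (Cn NB [Id 1, Cn (SEQ cf) [Id 0]]) (y # [x]) 0" using inner[of y] y1 by simp
      show "\<forall>z<y. \<exists>v. eval (Cn NB [Id 1, Cn (SEQ cf) [Id 0]]) (z # [x]) v \<and> 0 < v"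
        using inner y2 by fastforce
    qed
    then show "x \<in> W (encode (BT cf))" unfolding W_def phi_def by blast
  qed
qed



lemma Sset_myor: "Sset (myor a b) = Sset a \<union> Sset b"
  unfolding Sset_def using cb_myor by auto

lemma Sset_canon: "finite D \<Longrightarrow> Sset (canon_index D) = D"
  unfolding Sset_def canon_index_def using cb_canon by auto

lemma Sset_0: "Sset 0 = {}"
  unfolding Sset_def cb_def by simp

lemma Sset_finite: "finite (Sset v)"
proof -
  have "Sset v \<subseteq> {..<v}" unfolding Sset_def using cb_less by auto
  then show ?thesis using finite_subset by blast
qed

theorem mainTheorem5:
  fixes A :: "nat set"
  assumes "quasicreative A"
  shows "\<exists>B. re B \<and> infinite B \<and> B \<subseteq> - A"
proof -
  obtain f where fc: "computable_fin f" and
    fq: "\<forall>e. W e \<subseteq> - A \<longrightarrow> f e \<subseteq> - A \<and> (\<exists>z\<in>f e. z \<in> - A - W e)"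
    using assms unfolding quasicreative_def by blast
  have fin: "\<And>e. finite (f e)" using fc unfolding computable_fin_def by blast
  define F where "F e = canon_index (f e)" for e
  obtain cf where cf: "\<forall>x. eval cf [x] (F x)"
    using get_term fc unfolding computable_fin_def F_def by blast
  define h where "h n = encode (T (sq F n))" for n
  have Wh: "W (h n) = Sset (sq F n)" for n unfolding h_def by (rule W_T)
  have step: "Sset (sq F (Suc n)) = Sset (sq F n) \<union> f (h n)" for n
    using Sset_myor Sset_canon[OF fin] unfolding F_def h_def by simp
  have sub: "Sset (sq F n) \<subseteq> - A" for n
  proof (induction n)
    case 0 show ?case by (simp add: Sset_0)
  next
    case (Suc n)
    then have "f (h n) \<subseteq> - A" using fq Wh by metis
    then show ?case using Suc step by auto
  qed
  have grow: "\<exists>z. z \<in> Sset (sq F (Suc n)) \<and> z \<notin> Sset (sq F n)" for n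
  proof -
    have "W (h n) \<subseteq> - A" using sub[of n] Wh[of n] by simp
    then obtain z where "z \<in> f (h n)" "z \<notin> W (h n)" using fq by blast
    then show ?thesis using step Wh by auto
  qed
  have card: "n \<le> card (Sset (sq F n))" for n
  proof (induction n)
    case 0 show ?case by simp
  next
    case (Suc n)
    have "Sset (sq F n) \<subset> Sset (sq F (Suc n))" using grow[of n] step by auto
    then have "card (Sset (sq F n)) < card (Sset (sq F (Suc n)))"
      by (rule psubset_card_mono[OF Sset_finite])
    then show ?case using Suc by simp
  qed
  define B where "B = {x. \<exists>n. x \<in> Sset (sq F n)}"
  have reB: "re B" unfolding re_def B_def using W_BT[OF cf] by metis
  have subB: "B \<subseteq> - A" unfolding B_def using sub by blast
  have infB: "infinite B"
  proof
    assume finB: "finite B"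
    have "Sset (sq F (Suc (card B))) \<subseteq> B" unfolding B_def by blast
    then have "card (Sset (sq F (Suc (card B)))) \<le> card B" using card_mono[OF finB] by blast
    then show False using card[of "Suc (card B)"] by simp
  qed
  show ?thesis using reB infB subB by blast
qed

end
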